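(* Let $k$ be an algebraically closed field of characteristic $0$, $R=k[x,y]$, and let $L=(x^d,x^{d-1}y^{a_1},\dots,xy^{a_{d-1}},y^{a_d})$ with $0=a_0<a_1<\dots<a_d$ be a lex-segment ideal, with $b_i=a_i-a_{i-1}$. If $b_2\ge b_3\ge\dots\ge b_d$, then $L^2=(x^d,x^{d-1}y^{a_1},y^{a_d})L$. In particular $\operatorname{depth}\operatorname{gr}_L(R)>0$.
   Context: $\operatorname{gr}_L(R)=\bigoplus_{n\ge0}L^n/L^{n+1}$. *)

theory Defs
  imports "HOL-Computational_Algebra.Polynomial"
begin

text \<open>The polynomial ring k[x,y] is modelled as ('k poly) poly: the outer
  variable is y, the inner variable is x.\<close>

definition varX :: "'k::comm_ring_1 poly poly" where
  "varX = [:[:0, 1:]:]"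

definition varY :: "'k::comm_ring_1 poly poly" where
  "varY = [:0, 1:]"

definition ideal_gen :: "'a::comm_ring_1 set \<Rightarrow> 'a set" where
  "ideal_gen S = {z. \<exists>F r. finite F \<and> F \<subseteq> S \<and> z = (\<Sum>s\<in>F. r s * s)}"

definition ideal_mult :: "'a::comm_ring_1 set \<Rightarrow> 'a set \<Rightarrow> 'a set" where
  "ideal_mult I J = ideal_gen {i * j | i j. i \<in> I \<and> j \<in> J}"

fun ideal_pow :: "'a::comm_ring_1 set \<Rightarrow> nat \<Rightarrow> 'a set" where
  "ideal_pow I 0 = UNIV"
| "ideal_pow I (Suc n) = ideal_mult I (ideal_pow I n)"

text \<open>Associated graded ring gr_L(R) = \<Oplus>_n L^n/L^(n+1).
  An element is represented by a family f with f n \<in> L^n, almost all zero;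
  it is zero in gr_L(R) iff f n \<in> L^(n+1) for all n.\<close>

definition gr_elem :: "'a::comm_ring_1 set \<Rightarrow> (nat \<Rightarrow> 'a) \<Rightarrow> bool" where
  "gr_elem L f \<longleftrightarrow> (\<forall>n. f n \<in> ideal_pow L n) \<and> (\<exists>N. \<forall>n\<ge>N. f n = 0)"

definition gr_is_zero :: "'a::comm_ring_1 set \<Rightarrow> (nat \<Rightarrow> 'a) \<Rightarrow> bool" where
  "gr_is_zero L f \<longleftrightarrow> (\<forall>n. f n \<in> ideal_pow L (Suc n))"

definition gr_mult :: "(nat \<Rightarrow> 'a::comm_ring_1) \<Rightarrow> (nat \<Rightarrow> 'a) \<Rightarrow> nat \<Rightarrow> 'a" where
  "gr_mult f g n = (\<Sum>i\<le>n. f i * g (n - i))"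

text \<open>depth gr_L(R) > 0 with respect to the maximal homogeneous ideal
  M/L \<oplus> L/L^2 \<oplus> ..., where M is the maximal ideal of R containing L:
  this ideal contains a nonzerodivisor of gr_L(R).\<close>

definition depth_gr_pos :: "'a::comm_ring_1 set \<Rightarrow> 'a set \<Rightarrow> bool" where
  "depth_gr_pos M L \<longleftrightarrow>
     (\<exists>z. gr_elem L z \<and> z 0 \<in> M \<and>
        (\<forall>w. gr_elem L w \<and> \<not> gr_is_zero L w \<longrightarrow> \<not> gr_is_zero L (gr_mult z w)))"

end

theory Submission
  imports Defs
begin


lemma ideal_gen_in: "s \<in> S \<Longrightarrow> s \<in> ideal_gen S"
  unfolding ideal_gen_def
  by (rule CollectI, rule exI[of _ "{s}"], rule exI[of _ "\<lambda>_. 1"]) simp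

lemma ideal_gen_zero: "0 \<in> ideal_gen S"
  unfolding ideal_gen_def by (rule CollectI, rule exI[of _ "{}"]) simp

lemma ideal_gen_add:
  assumes "x \<in> ideal_gen S" "y \<in> ideal_gen S" shows "x + y \<in> ideal_gen S"
proof -
  from assms obtain F1 r1 F2 r2 where h: "finite F1" "F1 \<subseteq> S" "x = (\<Sum>s\<in>F1. r1 s * s)"
     "finite F2" "F2 \<subseteq> S" "y = (\<Sum>s\<in>F2. r2 s * s)" unfolding ideal_gen_def by blast
  define r where "r s = (if s \<in> F1 then r1 s else 0) + (if s \<in> F2 then r2 s else 0)" for s
  have "(\<Sum>s\<in>F1 \<union> F2. (if s \<in> F1 then r1 s else 0) * s) = x"
    unfolding h(3) by (rule sum.mono_neutral_cong_right) (use h in auto)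
  moreover have "(\<Sum>s\<in>F1 \<union> F2. (if s \<in> F2 then r2 s else 0) * s) = y"
    unfolding h(6) by (rule sum.mono_neutral_cong_right) (use h in auto)
  ultimately have "x + y = (\<Sum>s\<in>F1 \<union> F2. r s * s)"
    by (simp add: r_def sum.distrib distrib_right del: sum.union_disjoint)
  thus ?thesis using h unfolding ideal_gen_def by (intro CollectI exI[of _ "F1 \<union> F2"] exI[of _ r]) simp
qed

lemma ideal_gen_mult:
  assumes "x \<in> ideal_gen S" shows "c * x \<in> ideal_gen S"
proof -
  from assms obtain F r where h: "finite F" "F \<subseteq> S" "x = (\<Sum>s\<in>F. r s * s)"
    unfolding ideal_gen_def by blast
  have "c * x = (\<Sum>s\<in>F. (c * r s) * s)" unfolding h(3) by (simp add: sum_distrib_left mult.assoc)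
  thus ?thesis using h(1,2) unfolding ideal_gen_def by (intro CollectI exI[of _ F] exI[of _ "\<lambda>s. c * r s"]) simp
qed

lemma ideal_gen_sum:
  "(\<And>i. i \<in> A \<Longrightarrow> f i \<in> ideal_gen S) \<Longrightarrow> sum f A \<in> ideal_gen S"
proof (induction A rule: infinite_finite_induct)
  case (infinite A) then show ?case by (simp add: ideal_gen_zero)
next
  case empty then show ?case by (simp add: ideal_gen_zero)
next
  case (insert x F) then show ?case by (simp add: ideal_gen_add)
qed

lemma ideal_gen_least:
  assumes "S \<subseteq> I" "0 \<in> I" "\<And>x y. x \<in> I \<Longrightarrow> y \<in> I \<Longrightarrow> x + y \<in> I"
    "\<And>r x. x \<in> I \<Longrightarrow> r * x \<in> I"
  shows "ideal_gen S \<subseteq> I"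
proof
  fix z assume "z \<in> ideal_gen S"
  then obtain F r where h: "finite F" "F \<subseteq> S" "z = (\<Sum>s\<in>F. r s * s)"
    unfolding ideal_gen_def by blast
  have "(\<Sum>s\<in>F. r s * s) \<in> I" using h(1,2)
  proof (induction F rule: finite_induct)
    case empty then show ?case using assms(2) by simp
  next
    case (insert x F)
    have "r x * x \<in> I" using insert assms(1,4) by blast
    then show ?case using insert assms(3) by simp
  qed
  thus "z \<in> I" using h by simp
qed

lemma ideal_gen_subset:
  "A \<subseteq> ideal_gen B \<Longrightarrow> ideal_gen A \<subseteq> ideal_gen B"
  by (rule ideal_gen_least) (simp_all add: ideal_gen_zero ideal_gen_add ideal_gen_mult)

lemma ideal_gen_dvd:
  assumes "\<And>x. x \<in> A \<Longrightarrow> \<exists>y\<in>B. y dvd x"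
  shows "ideal_gen A \<subseteq> ideal_gen B"
proof (rule ideal_gen_subset, rule subsetI)
  fix x assume "x \<in> A"
  then obtain y k where "y \<in> B" "x = k * y" using assms by (metis dvd_def mult.commute)
  thus "x \<in> ideal_gen B" by (simp add: ideal_gen_in ideal_gen_mult)
qed

lemma ideal_gen_mono: "A \<subseteq> B \<Longrightarrow> ideal_gen A \<subseteq> ideal_gen B"
  by (rule ideal_gen_subset) (meson ideal_gen_in subset_iff)

lemma ideal_mult_gen:
  "ideal_mult (ideal_gen A) (ideal_gen B) = ideal_gen {a * b | a b. a \<in> A \<and> b \<in> B}"
proof
  show "ideal_gen {a * b | a b. a \<in> A \<and> b \<in> B} \<subseteq> ideal_mult (ideal_gen A) (ideal_gen B)"
    unfolding ideal_mult_def by (rule ideal_gen_mono) (blast intro: ideal_gen_in)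
next
  let ?P = "{a * b | a b. a \<in> A \<and> b \<in> B}"
  have key: "i * j \<in> ideal_gen ?P" if "i \<in> ideal_gen A" "j \<in> ideal_gen B" for i j
  proof -
    from that obtain F r G t where h: "finite F" "F \<subseteq> A" "i = (\<Sum>s\<in>F. r s * s)"
      "finite G" "G \<subseteq> B" "j = (\<Sum>u\<in>G. t u * u)" unfolding ideal_gen_def by blast
    have "i * j = (\<Sum>s\<in>F. \<Sum>u\<in>G. (r s * t u) * (s * u))"
      unfolding h(3,6) sum_distrib_right by (simp add: sum_distrib_left mult_ac)
    also have "\<dots> \<in> ideal_gen ?P"
    proof (rule ideal_gen_sum, rule ideal_gen_sum, rule ideal_gen_mult, rule ideal_gen_in)
      fix s u assume "s \<in> F" "u \<in> G"
      thus "s * u \<in> ?P" using h(2,5) by blast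
    qed
    finally show ?thesis .
  qed
  show "ideal_mult (ideal_gen A) (ideal_gen B) \<subseteq> ideal_gen ?P"
    unfolding ideal_mult_def by (rule ideal_gen_subset) (blast intro: key)
qed



definition xym :: "nat \<Rightarrow> nat \<Rightarrow> 'k::comm_ring_1 poly poly" where
  "xym p q = monom (monom 1 p) q"

lemma varX_pow: "(varX :: 'k::comm_ring_1 poly poly) ^ p = monom (monom 1 p) 0"
proof -
  have h: "(varX :: 'k poly poly) = monom (monom 1 1) 0"
    by (simp add: varX_def monom_0 monom_Suc)
  show ?thesis by (simp only: h monom_power) simp
qed

lemma varY_pow: "(varY :: 'k::comm_ring_1 poly poly) ^ q = monom 1 q"
proof -
  have h: "(varY :: 'k poly poly) = monom 1 1"
    by (simp add: varY_def monom_0 monom_Suc)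
  show ?thesis by (simp only: h monom_power) simp
qed

lemma varXY_mono: "(varX :: 'k::comm_ring_1 poly poly) ^ p * varY ^ q = xym p q"
  by (simp add: varX_pow varY_pow xym_def mult_monom)

lemma mono_mult: "xym p q * xym p' q' = (xym (p + p') (q + q') :: 'k::comm_ring_1 poly poly)"
  by (simp add: xym_def mult_monom)

lemma mono_00: "xym 0 0 = (1 :: 'k::comm_ring_1 poly poly)"
  by (simp add: xym_def monom_0 one_pCons)

lemma mono_dvd:
  assumes "p \<le> p'" "q \<le> q'" shows "(xym p q :: 'k::comm_ring_1 poly poly) dvd xym p' q'"
proof -
  have "xym p' q' = (xym (p' - p) (q' - q) :: 'k poly poly) * xym p q"
    using assms by (simp add: mono_mult)
  thus ?thesis by simp
qed

lemma coeff_mono_mult: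
  "coeff (coeff (xym p q * u) Q) P =
     (if p \<le> P \<and> q \<le> Q then coeff (coeff u (Q - q)) (P - p) else (0::'k::comm_ring_1))"
  by (simp add: xym_def coeff_monom_mult)

lemma coeff_mono:
  "coeff (coeff (xym p q) Q) P = (if P = p \<and> Q = q then 1 else (0::'k::comm_ring_1))"
  by (simp add: xym_def coeff_monom)

definition upset :: "(nat \<times> nat) set \<Rightarrow> (nat \<times> nat) set" where
  "upset G = {(P, Q). \<exists>(p, q)\<in>G. p \<le> P \<and> q \<le> Q}"

lemma upset_mono: "(p, q) \<in> upset G \<Longrightarrow> p \<le> P \<Longrightarrow> q \<le> Q \<Longrightarrow> (P, Q) \<in> upset G"
proof -
  assume a: "(p, q) \<in> upset G" "p \<le> P" "q \<le> Q"
  then obtain p0 q0 where "(p0, q0) \<in> G" "p0 \<le> p" "q0 \<le> q" unfolding upset_def by auto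
  thus ?thesis using a(2,3) unfolding upset_def by (auto intro!: bexI[of _ "(p0, q0)"])
qed

lemma monomial_ideal:
  "ideal_gen ((\<lambda>(p, q). xym p q) ` G) =
     {f :: 'k::comm_ring_1 poly poly. \<forall>P Q. coeff (coeff f Q) P \<noteq> 0 \<longrightarrow> (P, Q) \<in> upset G}"
  (is "?L = ?R")
proof
  show "?L \<subseteq> ?R"
  proof (rule ideal_gen_least)
    show "(\<lambda>(p, q). xym p q) ` G \<subseteq> ?R"
    proof
      fix f :: "'k poly poly" assume "f \<in> (\<lambda>(p, q). xym p q) ` G"
      then obtain p q where "(p, q) \<in> G" "f = xym p q" by auto
      thus "f \<in> ?R" by (auto simp: coeff_mono upset_def split: if_splits)
    qed
    show "0 \<in> ?R" by simp
    show "x + y \<in> ?R" if "x \<in> ?R" "y \<in> ?R" for x y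
      using that by (auto simp: coeff_add) (metis add.right_neutral add_0)
    show "r * x \<in> ?R" if "x \<in> ?R" for r x
    proof (clarify, rule ccontr)
      fix P Q assume nz: "coeff (coeff (r * x) Q) P \<noteq> 0" and nin: "(P, Q) \<notin> upset G"
      have z: "coeff (coeff x (Q - i)) (P - j) = 0" if "i \<le> Q" "j \<le> P" for i j
      proof (rule ccontr)
        assume "coeff (coeff x (Q - i)) (P - j) \<noteq> 0"
        hence "(P - j, Q - i) \<in> upset G" using \<open>x \<in> ?R\<close> by blast
        hence "(P, Q) \<in> upset G" by (rule upset_mono) auto
        thus False using nin by simp
      qed
      have "coeff (coeff (r * x) Q) P =
          (\<Sum>i\<le>Q. \<Sum>j\<le>P. coeff (coeff r i) j * coeff (coeff x (Q - i)) (P - j))"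
        by (simp add: coeff_mult coeff_sum)
      also have "\<dots> = 0" using z by simp
      finally show False using nz by simp
    qed
  qed
next
  show "?R \<subseteq> ?L"
  proof
    fix f :: "'k poly poly" assume f: "f \<in> ?R"
    have trm: "monom (monom (coeff (coeff f q) p) p) q \<in> ?L" for p q
    proof (cases "coeff (coeff f q) p = 0")
      case True then show ?thesis by (simp add: ideal_gen_zero)
    next
      case False
      hence "(p, q) \<in> upset G" using f by blast
      then obtain p0 q0 where g: "(p0, q0) \<in> G" "p0 \<le> p" "q0 \<le> q" unfolding upset_def by auto
      have "monom (monom (coeff (coeff f q) p) p) q =
            monom (monom (coeff (coeff f q) p) 0) 0 * (xym (p - p0) (q - q0) * xym p0 q0)"
        using g by (simp add: mono_mult xym_def mult_monom)
      also have "\<dots> \<in> ?L"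
        using g by (intro ideal_gen_mult ideal_gen_in) (auto intro: rev_image_eqI[of "(p0,q0)"])
      finally show ?thesis .
    qed
    have "f = (\<Sum>q\<le>degree f. monom (coeff f q) q)" by (simp add: poly_as_sum_of_monoms)
    also have "\<dots> = (\<Sum>q\<le>degree f. \<Sum>p\<le>degree (coeff f q). monom (monom (coeff (coeff f q) p) p) q)"
      by (simp add: poly_as_sum_of_monoms monom_sum[symmetric])
    also have "\<dots> \<in> ?L" by (intro ideal_gen_sum trm)
    finally show "f \<in> ?L" .
  qed
qed



definition Lgens :: "nat \<Rightarrow> (nat \<Rightarrow> nat) \<Rightarrow> 'k::comm_ring_1 poly poly set" where
  "Lgens d a = (\<lambda>i. xym (d - i) (a i)) ` {..d}"

definition Gp :: "nat \<Rightarrow> (nat \<Rightarrow> nat) \<Rightarrow> nat \<Rightarrow> (nat \<times> nat) set" where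
  "Gp d a n = {(n * d - sum_mset M, sum_mset (image_mset a M)) | M. size M = n \<and> set_mset M \<subseteq> {..d}}"

definition Eset :: "nat \<Rightarrow> (nat \<Rightarrow> nat) \<Rightarrow> nat \<Rightarrow> (nat \<times> nat) set" where
  "Eset d a n = {(P, Q). \<exists>M. size M = n \<and> set_mset M \<subseteq> {..d} \<and> n * d \<le> P + sum_mset M
      \<and> sum_mset (image_mset a M) \<le> Q}"

lemma sum_mset_bound: "set_mset M \<subseteq> {..d} \<Longrightarrow> sum_mset M \<le> size M * d"
  by (induction M) auto

lemma ideal_gen_one: "ideal_gen {1 :: 'a::comm_ring_1} = UNIV"
proof -
  have "x \<in> ideal_gen {1}" for x :: 'a
    using ideal_gen_mult[OF ideal_gen_in[of 1 "{1}"], of x] by simp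
  thus ?thesis by auto
qed

lemma Gp_0: "Gp d a 0 = {(0, 0)}"
  unfolding Gp_def by auto

lemma Gp_Suc:
  "{x * y | x y. x \<in> Lgens d a \<and> y \<in> (\<lambda>(p, q). xym p q) ` Gp d a n}
    = ((\<lambda>(p, q). xym p q) ` Gp d a (Suc n) :: 'k::comm_ring_1 poly poly set)"
proof (intro equalityI subsetI)
  fix z :: "'k poly poly"
  assume "z \<in> {x * y | x y. x \<in> Lgens d a \<and> y \<in> (\<lambda>(p, q). xym p q) ` Gp d a n}"
  then obtain i M where h: "i \<le> d" "size M = n" "set_mset M \<subseteq> {..d}"
    "z = xym (d - i) (a i) * xym (n * d - sum_mset M) (sum_mset (image_mset a M))"
    unfolding Lgens_def Gp_def by auto
  have b: "sum_mset M \<le> n * d" using sum_mset_bound[OF h(3)] h(2) by simp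
  have "z = xym (Suc n * d - sum_mset (add_mset i M)) (sum_mset (image_mset a (add_mset i M)))"
    using h(1,4) b by (simp add: mono_mult algebra_simps)
  moreover have "size (add_mset i M) = Suc n" "set_mset (add_mset i M) \<subseteq> {..d}" using h by auto
  ultimately show "z \<in> (\<lambda>(p, q). xym p q) ` Gp d a (Suc n)"
    unfolding Gp_def
    by (intro image_eqI[where x = "(Suc n * d - sum_mset (add_mset i M), sum_mset (image_mset a (add_mset i M)))"])
       (simp, blast)
next
  fix z :: "'k poly poly"
  assume "z \<in> (\<lambda>(p, q). xym p q) ` Gp d a (Suc n)"
  then obtain M' where h: "size M' = Suc n" "set_mset M' \<subseteq> {..d}"
    "z = xym (Suc n * d - sum_mset M') (sum_mset (image_mset a M'))"
    unfolding Gp_def by auto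
  obtain i M where iM: "M' = add_mset i M" using h(1) by (metis size_eq_Suc_imp_eq_union)
  have hi: "i \<le> d" "size M = n" "set_mset M \<subseteq> {..d}" using h iM by auto
  have b: "sum_mset M \<le> n * d" using sum_mset_bound[OF hi(3)] hi(2) by simp
  have "z = xym (d - i) (a i) * xym (n * d - sum_mset M) (sum_mset (image_mset a M))"
    using h(3) iM hi(1) b by (simp add: mono_mult algebra_simps)
  moreover have "xym (d - i) (a i) \<in> (Lgens d a :: 'k poly poly set)"
    using hi(1) unfolding Lgens_def by auto
  moreover have "xym (n * d - sum_mset M) (sum_mset (image_mset a M)) \<in>
      ((\<lambda>(p, q). xym p q) ` Gp d a n :: 'k poly poly set)"
    using hi unfolding Gp_def
    by (intro image_eqI[where x = "(n * d - sum_mset M, sum_mset (image_mset a M))"]) (simp, blast)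
  ultimately show "z \<in> {x * y | x y. x \<in> Lgens d a \<and> y \<in> (\<lambda>(p, q). xym p q) ` Gp d a n}"
    by blast
qed

lemma pow_gen:
  "ideal_pow (ideal_gen (Lgens d a)) n =
     ideal_gen ((\<lambda>(p, q). xym p q) ` Gp d a n :: 'k::comm_ring_1 poly poly set)"
proof (induction n)
  case 0
  show ?case by (simp add: Gp_0 mono_00 ideal_gen_one)
next
  case (Suc n)
  show ?case by (simp add: Suc ideal_mult_gen Gp_Suc)
qed

lemma upset_Gp: "upset (Gp d a n) = Eset d a n"
proof (intro equalityI subsetI)
  fix x assume "x \<in> upset (Gp d a n)"
  then show "x \<in> Eset d a n" unfolding upset_def Gp_def Eset_def by force
next
  fix x assume "x \<in> Eset d a n"
  then obtain P Q M where h: "x = (P, Q)" "size M = n" "set_mset M \<subseteq> {..d}" "n * d \<le> P + sum_mset M"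
      "sum_mset (image_mset a M) \<le> Q" unfolding Eset_def by auto
  have "(n * d - sum_mset M, sum_mset (image_mset a M)) \<in> Gp d a n" unfolding Gp_def using h by blast
  moreover have "n * d - sum_mset M \<le> P" using h by simp
  ultimately show "x \<in> upset (Gp d a n)" unfolding upset_def using h by blast
qed

lemma pow_char:
  "(f :: 'k::comm_ring_1 poly poly) \<in> ideal_pow (ideal_gen (Lgens d a)) n \<longleftrightarrow>
     (\<forall>P Q. coeff (coeff f Q) P \<noteq> 0 \<longrightarrow> (P, Q) \<in> Eset d a n)"
  by (simp add: pow_gen monomial_ideal upset_Gp)

lemma Eset_step:
  "(P, Q) \<in> Eset d a n \<Longrightarrow> i \<le> d \<Longrightarrow> (P + (d - i), Q + a i) \<in> Eset d a (Suc n)"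
proof -
  assume "(P, Q) \<in> Eset d a n" "i \<le> d"
  then obtain M where h: "size M = n" "set_mset M \<subseteq> {..d}" "n * d \<le> P + sum_mset M"
    "sum_mset (image_mset a M) \<le> Q" unfolding Eset_def by auto
  show ?thesis unfolding Eset_def
    using h \<open>i \<le> d\<close> by (intro CollectI case_prodI exI[of _ "add_mset i M"]) auto
qed

lemma pow_one: "ideal_pow (ideal_gen S) 1 = ideal_gen (S :: 'a::comm_ring_1 set)"
proof -
  have "ideal_pow (ideal_gen S) 1 = ideal_mult (ideal_gen S) (ideal_gen {1})"
    by (simp add: ideal_gen_one)
  also have "\<dots> = ideal_gen S" by (simp add: ideal_mult_gen)
  finally show ?thesis .
qed



lemma conc:
  fixes a :: "nat \<Rightarrow> nat"
  assumes h3: "\<And>i. i < d \<Longrightarrow> a i < a (Suc i)"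
    and h5: "\<And>i j. 2 \<le> i \<Longrightarrow> i \<le> j \<Longrightarrow> j \<le> d \<Longrightarrow> a j - a (j - 1) \<le> a i - a (i - 1)"
    and k: "1 \<le> k" "k \<le> j" "j + t \<le> d"
  shows "a (j + t) + a k \<le> a (k + t) + a j"
  using k(3)
proof (induction t)
  case 0 then show ?case by simp
next
  case (Suc t)
  have IH: "a (j + t) + a k \<le> a (k + t) + a j" using Suc by simp
  have s: "a (j + Suc t) - a (j + Suc t - 1) \<le> a (k + Suc t) - a (k + Suc t - 1)"
    using h5[of "k + Suc t" "j + Suc t"] k Suc.prems by simp
  have m1: "a (j + t) < a (j + Suc t)" using h3[of "j + t"] Suc.prems by simp
  have m2: "a (k + t) < a (k + Suc t)" using h3[of "k + t"] Suc.prems k by simp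
  show ?case using IH s m1 m2 by simp
qed

definition Jgens :: "nat \<Rightarrow> (nat \<Rightarrow> nat) \<Rightarrow> 'k::comm_ring_1 poly poly set" where
  "Jgens d a = {xym d 0, xym (d - 1) (a 1), xym 0 (a d)}"

lemma dvd_case:
  fixes a :: "nat \<Rightarrow> nat"
  assumes d: "d \<ge> 1" and a0: "a 0 = 0"
    and h3: "\<And>i. i < d \<Longrightarrow> a i < a (Suc i)"
    and h5: "\<And>i j. 2 \<le> i \<Longrightarrow> i \<le> j \<Longrightarrow> j \<le> d \<Longrightarrow> a j - a (j - 1) \<le> a i - a (i - 1)"
    and ik: "i \<le> k" "k \<le> d"
  shows "\<exists>j\<in>(Jgens d a :: 'k::comm_ring_1 poly poly set). \<exists>l\<in>Lgens d a.
           j * l dvd xym (d - i) (a i) * xym (d - k) (a k)"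
proof -
  have inL: "xym (d - m) (a m) \<in> (Lgens d a :: 'k poly poly set)" if "m \<le> d" for m
    using that unfolding Lgens_def by auto
  consider "i = 0" | "i = 1" | "k = d" | "2 \<le> i" "k \<le> d - 1" using ik by linarith
  then show ?thesis
  proof cases
    case 1
    then show ?thesis using a0 ik by (intro bexI[of _ "xym d 0"] bexI[of _ "xym (d - k) (a k)"] inL)
      (auto simp: Jgens_def)
  next
    case 2
    then show ?thesis using ik
      by (intro bexI[of _ "xym (d - 1) (a 1)"] bexI[of _ "xym (d - k) (a k)"] inL) (auto simp: Jgens_def)
  next
    case 3
    then show ?thesis using ik
      by (intro bexI[of _ "xym 0 (a d)"] bexI[of _ "xym (d - i) (a i)"] inL)
         (auto simp: Jgens_def mult.commute)
  next
    case 4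
    show ?thesis
    proof (cases "i + k - 1 \<le> d")
      case True
      have c: "a (k + (i - 1)) + a 1 \<le> a (1 + (i - 1)) + a k"
        using conc[where k=1 and j=k and t="i - 1", OF h3 h5] 4 True ik by simp
      have "xym (d - 1) (a 1) * xym (d - (i + k - 1)) (a (i + k - 1)) dvd
            (xym (d - i) (a i) * xym (d - k) (a k) :: 'k poly poly)"
        unfolding mono_mult using c 4 True ik by (intro mono_dvd) (auto simp: add.commute)
      moreover have "xym (d - (i + k - 1)) (a (i + k - 1)) \<in> (Lgens d a :: 'k poly poly set)"
        using True by (intro inL)
      moreover have "xym (d - 1) (a 1) \<in> (Jgens d a :: 'k poly poly set)" by (simp add: Jgens_def)
      ultimately show ?thesis by blast
    next
      case False
      have c: "a (i + (d - i)) + a (i + k - d) \<le> a (i + k - d + (d - i)) + a i"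
        using conc[where k="i + k - d" and j=i and t="d - i", OF h3 h5] 4 False ik by simp
      have "xym 0 (a d) * xym (d - (i + k - d)) (a (i + k - d)) dvd
            (xym (d - i) (a i) * xym (d - k) (a k) :: 'k poly poly)"
        unfolding mono_mult using c 4 False ik by (intro mono_dvd) auto
      moreover have "xym (d - (i + k - d)) (a (i + k - d)) \<in> (Lgens d a :: 'k poly poly set)"
        using ik by (intro inL) simp
      moreover have "xym 0 (a d) \<in> (Jgens d a :: 'k poly poly set)" by (simp add: Jgens_def)
      ultimately show ?thesis by blast
    qed
  qed
qed

lemma part1:
  fixes a :: "nat \<Rightarrow> nat"
  assumes d: "d \<ge> 1" and a0: "a 0 = 0"
    and h3: "\<And>i. i < d \<Longrightarrow> a i < a (Suc i)"
    and h5: "\<And>i j. 2 \<le> i \<Longrightarrow> i \<le> j \<Longrightarrow> j \<le> d \<Longrightarrow> a j - a (j - 1) \<le> a i - a (i - 1)"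
  shows "ideal_pow (ideal_gen (Lgens d a)) 2 =
     ideal_mult (ideal_gen (Jgens d a)) (ideal_gen (Lgens d a) :: 'k::comm_ring_1 poly poly set)"
proof -
  have "ideal_pow (ideal_gen (Lgens d a)) 2 =
       ideal_mult (ideal_gen (Lgens d a)) (ideal_pow (ideal_gen (Lgens d a :: 'k poly poly set)) 1)"
    by (simp add: numeral_2_eq_2)
  also have "\<dots> = ideal_mult (ideal_gen (Lgens d a)) (ideal_gen (Lgens d a :: 'k poly poly set))"
    by (simp only: pow_one)
  also have "\<dots> = ideal_gen {x * y | x y. x \<in> Lgens d a \<and> y \<in> (Lgens d a :: 'k poly poly set)}"
    by (rule ideal_mult_gen)
  finally have l: "ideal_pow (ideal_gen (Lgens d a)) 2 = \<dots>" .
  have r: "ideal_mult (ideal_gen (Jgens d a)) (ideal_gen (Lgens d a)) =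
      ideal_gen {x * y | x y. x \<in> Jgens d a \<and> y \<in> (Lgens d a :: 'k poly poly set)}"
    by (simp add: ideal_mult_gen)
  have JL: "Jgens d a \<subseteq> (Lgens d a :: 'k poly poly set)"
  proof -
    have "xym d 0 = (xym (d - 0) (a 0) :: 'k poly poly)" using a0 by simp
    moreover have "(xym 0 (a d) :: 'k poly poly) = xym (d - d) (a d)" by simp
    ultimately show ?thesis unfolding Jgens_def Lgens_def using d by fastforce
  qed
  show ?thesis unfolding l r
  proof
    show "ideal_gen {x * y | x y. x \<in> Lgens d a \<and> y \<in> Lgens d a}
        \<subseteq> ideal_gen {x * y | x y. x \<in> Jgens d a \<and> y \<in> (Lgens d a :: 'k poly poly set)}"
    proof (rule ideal_gen_dvd)
      fix z assume "z \<in> {x * y | x y. x \<in> Lgens d a \<and> y \<in> (Lgens d a :: 'k poly poly set)}"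
      then obtain i k where ik: "i \<le> d" "k \<le> d" "z = xym (d - i) (a i) * xym (d - k) (a k)"
        unfolding Lgens_def by auto
      have "\<exists>j\<in>(Jgens d a :: 'k poly poly set). \<exists>l\<in>Lgens d a. j * l dvd z"
      proof (cases "i \<le> k")
        case True then show ?thesis using dvd_case[OF d a0 h3 h5 True ik(2)] ik(3) by simp
      next
        case False then show ?thesis using dvd_case[OF d a0 h3 h5 _ ik(1), of k] ik(3)
          by (simp add: mult.commute)
      qed
      then show "\<exists>y\<in>{x * y | x y. x \<in> Jgens d a \<and> y \<in> Lgens d a}. y dvd z" by blast
    qed
  next
    show "ideal_gen {x * y | x y. x \<in> Jgens d a \<and> y \<in> Lgens d a}
        \<subseteq> ideal_gen {x * y | x y. x \<in> Lgens d a \<and> y \<in> (Lgens d a :: 'k poly poly set)}"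
      using JL by (intro ideal_gen_mono) blast
  qed
qed



lemma sum_ge_size: "(\<And>x. x \<in># M \<Longrightarrow> 1 \<le> x) \<Longrightarrow> size M \<le> sum_mset (M :: nat multiset)"
proof (induction M)
  case empty then show ?case by simp
next
  case (add x M)
  have "1 \<le> x" using add.prems by simp
  moreover have "size M \<le> sum_mset M" using add.IH add.prems by simp
  ultimately show ?case by simp
qed

lemma sum_le_size: "(\<And>x. x \<in># M \<Longrightarrow> x \<le> 1) \<Longrightarrow> sum_mset (M :: nat multiset) \<le> size M"
proof (induction M)
  case empty then show ?case by simp
next
  case (add x M)
  have "x \<le> 1" using add.prems by simp
  moreover have "sum_mset M \<le> size M" using add.IH add.prems by simp
  ultimately show ?case by simp
qed

lemma X_lemma:
  assumes nin: "(P, Q) \<notin> Eset d a (Suc n)" and inn: "(P + d, Q) \<in> Eset d a (Suc (Suc n))"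
  shows "P + n + 2 \<le> Suc n * d"
proof (rule ccontr)
  assume c: "\<not> P + n + 2 \<le> Suc n * d"
  from inn obtain M where h: "size M = Suc (Suc n)" "set_mset M \<subseteq> {..d}"
    "Suc (Suc n) * d \<le> P + d + sum_mset M" "sum_mset (image_mset a M) \<le> Q"
    unfolding Eset_def by auto
  show False
  proof (cases "0 \<in># M")
    case True
    then obtain M' where M': "M = add_mset 0 M'" by (metis multi_member_split)
    have "(P, Q) \<in> Eset d a (Suc n)" unfolding Eset_def
      using h M' by (intro CollectI case_prodI exI[of _ M']) auto
    thus False using nin by simp
  next
    case False
    obtain e M' where M': "M = add_mset e M'" using h(1) by (metis size_eq_Suc_imp_eq_union)
    have "1 \<le> x" if "x \<in># M'" for x
    proof (rule ccontr)
      assume "\<not> 1 \<le> x"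
      hence "x = 0" by simp
      hence "0 \<in># M" using that M' by simp
      thus False using False by simp
    qed
    hence "size M' \<le> sum_mset M'" by (rule sum_ge_size)
    hence "(P, Q) \<in> Eset d a (Suc n)" unfolding Eset_def
      using h M' c by (intro CollectI case_prodI exI[of _ M']) auto
    thus False using nin by simp
  qed
qed

definition sqs :: "nat multiset \<Rightarrow> nat" where
  "sqs M = sum_mset (image_mset (\<lambda>x. x * x) M)"

lemma sqs_bound: "set_mset M \<subseteq> {..d} \<Longrightarrow> sqs M \<le> size M * (d * d)"
  unfolding sqs_def
proof (induction M)
  case empty then show ?case by simp
next
  case (add x M)
  have "x * x \<le> d * d" using add.prems by (simp add: mult_le_mono)
  then show ?case using add by simp
qed

lemma B_lemma:
  "set_mset M \<subseteq> {..c} \<Longrightarrow> (\<forall>i j. {#i, j#} \<subseteq># M \<longrightarrow> i < 2 \<or> j < 2) \<Longrightarrow> M \<noteq> {#}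
    \<Longrightarrow> sum_mset M + 1 \<le> size M + max c 1"
proof (induction M)
  case empty then show ?case by simp
next
  case (add x M)
  show ?case
  proof (cases "M = {#}")
    case True then show ?thesis using add.prems by auto
  next
    case False
    have pr: "\<forall>i j. {#i, j#} \<subseteq># M \<longrightarrow> i < 2 \<or> j < 2"
    proof (intro allI impI)
      fix i j assume "{#i, j#} \<subseteq># M"
      moreover have "M \<subseteq># add_mset x M" by (metis add_mset_add_single mset_subset_eq_add_left)
      ultimately have "{#i, j#} \<subseteq># add_mset x M" by (rule subset_mset.order_trans)
      thus "i < 2 \<or> j < 2" using add.prems(2) by blast
    qed
    have IH: "sum_mset M + 1 \<le> size M + max c 1" using add.IH add.prems(1) pr False by simp
    show ?thesis
    proof (cases "x < 2")
      case True then show ?thesis using IH by simp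
    next
      case xl: False
      have "y \<le> 1" if "y \<in># M" for y
      proof -
        have "{#x, y#} \<subseteq># add_mset x M" using that by simp
        thus ?thesis using add.prems(2) xl by fastforce
      qed
      hence "sum_mset M \<le> size M" by (rule sum_le_size)
      moreover have "x \<le> c" using add.prems(1) by simp
      ultimately show ?thesis by simp
    qed
  qed
qed

lemma conc_ms:
  fixes a :: "nat \<Rightarrow> nat"
  assumes h3: "\<And>i. i < d \<Longrightarrow> a i < a (Suc i)"
    and h5: "\<And>i j. 2 \<le> i \<Longrightarrow> i \<le> j \<Longrightarrow> j \<le> d \<Longrightarrow> a j - a (j - 1) \<le> a i - a (i - 1)"
  shows "set_mset M \<subseteq> {..d} \<Longrightarrow> 1 \<le> size M \<Longrightarrow> size M + d \<le> sum_mset M + 1 \<Longrightarrow>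
    \<exists>M'. size M' = size M \<and> set_mset M' \<subseteq> {..d} \<and> sum_mset M \<le> sum_mset M' \<and>
      sum_mset (image_mset a M') \<le> sum_mset (image_mset a M) \<and> d \<in># M'"
proof (induction M rule: measure_induct_rule[where f = "\<lambda>M. size M * (d * d) - sqs M"])
  case (less M)
  show ?case
  proof (cases "d \<in># M")
    case True then show ?thesis using less.prems by blast
  next
    case dnot: False
    have lt: "x < d" if "x \<in># M" for x using that dnot less.prems(1) by (metis atMost_iff le_neq_implies_less subsetD)
    show ?thesis
    proof (cases "\<exists>i j. 2 \<le> i \<and> i \<le> j \<and> {#i, j#} \<subseteq># M")
      case True
      then obtain i j where ij: "2 \<le> i" "i \<le> j" "{#i, j#} \<subseteq># M" by blast
      define R where "R = M - {#i, j#}"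
      have "{#i, j#} + R = M" unfolding R_def using ij(3) by (rule subset_mset.add_diff_inverse)
      hence R: "M = add_mset i (add_mset j R)" by simp
      have jd: "j < d" using lt R by simp
      define M1 where "M1 = add_mset (i - 1) (add_mset (j + 1) R)"
      have s1: "size M1 = size M" using R M1_def by simp
      have set1: "set_mset M1 \<subseteq> {..d}" using R M1_def less.prems(1) jd by auto
      have sum1: "sum_mset M1 = sum_mset M" using R M1_def ij by simp
      have cst: "a (j + 1) - a j \<le> a i - a (i - 1)" using h5[of i "j + 1"] ij jd by simp
      have m1: "a j < a (j + 1)" using h3[of j] jd by simp
      have m2: "a (i - 1) < a i" using h3[of "i - 1"] ij jd by simp
      have cost1: "sum_mset (image_mset a M1) \<le> sum_mset (image_mset a M)"
        using R M1_def cst m1 m2 by simp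
      have "sqs M < sqs M1"
      proof -
        have "i * i + j * j < (i - 1) * (i - 1) + (j + 1) * (j + 1)"
        proof -
          obtain i' where "i = Suc i'" using ij by (cases i) auto
          thus ?thesis using ij by (simp add: algebra_simps)
        qed
        thus ?thesis using R M1_def by (simp add: sqs_def)
      qed
      moreover have "sqs M1 \<le> size M1 * (d * d)" using set1 by (rule sqs_bound)
      ultimately have meas: "size M1 * (d * d) - sqs M1 < size M * (d * d) - sqs M" using s1 by simp
      obtain M' where M': "size M' = size M1" "set_mset M' \<subseteq> {..d}" "sum_mset M1 \<le> sum_mset M'"
        "sum_mset (image_mset a M') \<le> sum_mset (image_mset a M1)" "d \<in># M'"
        using less.IH[OF meas set1] s1 sum1 less.prems by auto
      show ?thesis using M' s1 sum1 cost1 by (intro exI[of _ M']) auto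
    next
      case False
      have nz: "M \<noteq> {#}" using less.prems(2) by auto
      have pr: "\<forall>i j. {#i, j#} \<subseteq># M \<longrightarrow> i < 2 \<or> j < 2"
      proof (intro allI impI)
        fix i j assume "{#i, j#} \<subseteq># M"
        moreover have "{#i, j#} = {#j, i#}" by (simp add: add_mset_commute)
        ultimately show "i < 2 \<or> j < 2" using False by (metis linorder_not_less nat_le_linear)
      qed
      have setc: "set_mset M \<subseteq> {..d - 1}" using lt by fastforce
      show ?thesis
      proof (cases "d = 1")
        case True
        have "x = 0" if "x \<in># M" for x using lt[OF that] True by simp
        hence s0: "sum_mset M = 0" by (metis sum_mset_0_iff)
        have False using s0 less.prems(2,3) True by linarith
        then show ?thesis ..
      next
        case False
        show ?thesis
        proof (cases "d = 0")
          case True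
          obtain x where "x \<in># M" using nz by (metis multiset_nonemptyE)
          then have False using lt True by fastforce
          then show ?thesis ..
        next
          case d0: False
          have "sum_mset M + 1 \<le> size M + max (d - 1) 1" using B_lemma[OF setc pr nz] .
          then have False using less.prems(3) d0 False by linarith
          then show ?thesis ..
        qed
      qed
    qed
  qed
qed

lemma Y_lemma:
  fixes a :: "nat \<Rightarrow> nat"
  assumes h3: "\<And>i. i < d \<Longrightarrow> a i < a (Suc i)"
    and h5: "\<And>i j. 2 \<le> i \<Longrightarrow> i \<le> j \<Longrightarrow> j \<le> d \<Longrightarrow> a j - a (j - 1) \<le> a i - a (i - 1)"
    and nin: "(P, Q) \<notin> Eset d a (Suc n)" and inn: "(P, Q + a d) \<in> Eset d a (Suc (Suc n))"
  shows "Suc n * d \<le> P + n"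
proof (rule ccontr)
  assume c: "\<not> Suc n * d \<le> P + n"
  from inn obtain M where h: "size M = Suc (Suc n)" "set_mset M \<subseteq> {..d}"
    "Suc (Suc n) * d \<le> P + sum_mset M" "sum_mset (image_mset a M) \<le> Q + a d"
    unfolding Eset_def by auto
  have "size M + d \<le> sum_mset M + 1" using h c by simp
  then obtain M' where M': "size M' = size M" "set_mset M' \<subseteq> {..d}" "sum_mset M \<le> sum_mset M'"
      "sum_mset (image_mset a M') \<le> sum_mset (image_mset a M)" "d \<in># M'"
    using conc_ms[OF h3 h5 h(2)] h(1) by auto
  obtain M'' where M'': "M' = add_mset d M''" using M'(5) by (metis multi_member_split)
  have "(P, Q) \<in> Eset d a (Suc n)" unfolding Eset_def
    using h M' M'' by (intro CollectI case_prodI exI[of _ M'']) auto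
  thus False using nin by simp
qed



lemma coeff_z_mult:
  "coeff (coeff ((xym d 0 + xym 0 D) * u) Q) P =
     (if d \<le> P then coeff (coeff u Q) (P - d) else 0) +
     (if D \<le> Q then coeff (coeff u (Q - D)) P else (0::'k::comm_ring_1))"
  by (simp add: distrib_right coeff_mono_mult)

lemma main_nzd:
  fixes a :: "nat \<Rightarrow> nat" and u :: "'k::comm_ring_1 poly poly"
  assumes d: "d \<ge> 1" and a0: "a 0 = 0"
    and h3: "\<And>i. i < d \<Longrightarrow> a i < a (Suc i)"
    and h5: "\<And>i j. 2 \<le> i \<Longrightarrow> i \<le> j \<Longrightarrow> j \<le> d \<Longrightarrow> a j - a (j - 1) \<le> a i - a (i - 1)"
    and u_in: "u \<in> ideal_pow (ideal_gen (Lgens d a)) n"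
    and u_nin: "u \<notin> ideal_pow (ideal_gen (Lgens d a)) (Suc n)"
  shows "(xym d 0 + xym 0 (a d)) * u \<notin> ideal_pow (ideal_gen (Lgens d a)) (Suc (Suc n))"
proof
  let ?c = "\<lambda>P Q. coeff (coeff u Q) P"
  let ?w = "(xym d 0 + xym 0 (a d)) * u"
  assume w_in: "?w \<in> ideal_pow (ideal_gen (Lgens d a)) (Suc (Suc n))"
  hence wE: "\<And>P Q. coeff (coeff ?w Q) P \<noteq> 0 \<Longrightarrow> (P, Q) \<in> Eset d a (Suc (Suc n))"
    unfolding pow_char by blast
  define S where "S = {(P, Q). ?c P Q \<noteq> 0 \<and> (P, Q) \<notin> Eset d a (Suc n)}"
  have Sne: "S \<noteq> {}" using u_nin unfolding S_def pow_char by auto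
  define B where "B = Max ((\<lambda>Q. degree (coeff u Q)) ` {..degree u})"
  have "S \<subseteq> {..B} \<times> {..degree u}"
  proof
    fix x assume "x \<in> S"
    then obtain P Q where x: "x = (P, Q)" "?c P Q \<noteq> 0" unfolding S_def by auto
    hence q: "coeff u Q \<noteq> 0" by auto
    hence "Q \<le> degree u" by (rule le_degree)
    moreover have "P \<le> degree (coeff u Q)" using x(2) by (rule le_degree)
    moreover have "degree (coeff u Q) \<le> B" unfolding B_def using \<open>Q \<le> degree u\<close> by (intro Max_ge) auto
    ultimately show "x \<in> {..B} \<times> {..degree u}" using x by auto
  qed
  hence Sfin: "finite S" by (rule finite_subset) auto
  have Ffin: "finite (fst ` S)" "fst ` S \<noteq> {}" using Sfin Sne by auto
  define pm where "pm = Max (fst ` S)"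
  obtain q where pmq: "(pm, q) \<in> S" using Max_in[OF Ffin] unfolding pm_def by auto
  have pm_max: "P \<le> pm" if "(P, Q) \<in> S" for P Q
    unfolding pm_def using Ffin that by (intro Max_ge) (auto intro: rev_image_eqI)
  show False
  proof (cases "pm + n + 2 \<le> Suc n * d")
    case False
    have nE: "(pm + d, q) \<notin> Eset d a (Suc (Suc n))"
      using X_lemma[of pm q d a n] pmq False unfolding S_def by auto
    have z: "(if a d \<le> q then ?c (pm + d) (q - a d) else 0) = 0"
    proof (rule ccontr)
      assume "(if a d \<le> q then ?c (pm + d) (q - a d) else 0) \<noteq> 0"
      hence h: "a d \<le> q" "?c (pm + d) (q - a d) \<noteq> 0" by (auto split: if_splits)
      have "(pm + d, q - a d) \<in> Eset d a (Suc n)"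
      proof (rule ccontr)
        assume "(pm + d, q - a d) \<notin> Eset d a (Suc n)"
        hence "(pm + d, q - a d) \<in> S" unfolding S_def using h by auto
        hence "pm + d \<le> pm" by (rule pm_max)
        thus False using d by simp
      qed
      from Eset_step[OF this, of d] have "(pm + d, q) \<in> Eset d a (Suc (Suc n))" using h by simp
      thus False using nE by simp
    qed
    have "coeff (coeff ?w q) (pm + d) = ?c pm q"
      using z by (simp only: coeff_z_mult) simp
    moreover have "?c pm q \<noteq> 0" using pmq unfolding S_def by auto
    ultimately show False using wE[of q "pm + d"] nE by auto
  next
    case True
    define pn where "pn = Min (fst ` S)"
    obtain q2 where pnq: "(pn, q2) \<in> S" using Min_in[OF Ffin] unfolding pn_def by auto
    have pn_min: "pn \<le> P" if "(P, Q) \<in> S" for P Q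
      unfolding pn_def using Ffin that by (intro Min_le) (auto intro: rev_image_eqI)
    have "pn \<le> pm" using pm_max[OF pnq] .
    hence "\<not> Suc n * d \<le> pn + n" using True by simp
    hence nE: "(pn, q2 + a d) \<notin> Eset d a (Suc (Suc n))"
      using Y_lemma[where P=pn and Q=q2 and n=n, OF h3 h5] pnq unfolding S_def by auto
    have z: "(if d \<le> pn then ?c (pn - d) (q2 + a d) else 0) = 0"
    proof (rule ccontr)
      assume "(if d \<le> pn then ?c (pn - d) (q2 + a d) else 0) \<noteq> 0"
      hence h: "d \<le> pn" "?c (pn - d) (q2 + a d) \<noteq> 0" by (auto split: if_splits)
      have "(pn - d, q2 + a d) \<in> Eset d a (Suc n)"
      proof (rule ccontr)
        assume "(pn - d, q2 + a d) \<notin> Eset d a (Suc n)"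
        hence "(pn - d, q2 + a d) \<in> S" unfolding S_def using h by auto
        hence "pn \<le> pn - d" by (rule pn_min)
        thus False using d h(1) by simp
      qed
      from Eset_step[OF this, of 0] have "(pn, q2 + a d) \<in> Eset d a (Suc (Suc n))"
        using h a0 by simp
      thus False using nE by simp
    qed
    have "coeff (coeff ?w (q2 + a d)) pn = ?c pn q2"
      using z by (simp only: coeff_z_mult) simp
    moreover have "?c pn q2 \<noteq> 0" using pnq unfolding S_def by auto
    ultimately show False using wE[of "q2 + a d" pn] nE by auto
  qed
qed



lemma zero_in_pow: "0 \<in> ideal_pow I n"
  by (cases n) (simp_all add: ideal_mult_def ideal_gen_zero)

theorem proposition4p2:
  fixes d :: nat and a :: "nat \<Rightarrow> nat"
    and L :: "'k::{alg_closed_field, field_char_0} poly poly set"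
  assumes "d \<ge> 1"
    and "a 0 = 0"
    and "\<And>i. i < d \<Longrightarrow> a i < a (Suc i)"
    and "L = ideal_gen {varX ^ (d - i) * varY ^ (a i) | i. i \<le> d}"
    and "\<And>i j. 2 \<le> i \<Longrightarrow> i \<le> j \<Longrightarrow> j \<le> d \<Longrightarrow>
            a j - a (j - 1) \<le> a i - a (i - 1)"
  shows "ideal_pow L 2 =
           ideal_mult (ideal_gen {varX ^ d, varX ^ (d - 1) * varY ^ (a 1), varY ^ (a d)}) L
         \<and> depth_gr_pos (ideal_gen {varX, varY}) L"
proof -
  note d = assms(1) and a0 = assms(2) and h3 = assms(3) and h5 = assms(5)
  have LL: "L = ideal_gen (Lgens d a)"
  proof -
    have "{varX ^ (d - i) * varY ^ (a i) | i. i \<le> d} = (Lgens d a :: 'k poly poly set)"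
      unfolding Lgens_def by (auto simp: varXY_mono)
    thus ?thesis using assms(4) by simp
  qed
  have JJ: "{varX ^ d, varX ^ (d - 1) * varY ^ (a 1), varY ^ (a d)} = (Jgens d a :: 'k poly poly set)"
  proof -
    have "(varX :: 'k poly poly) ^ d = xym d 0" using varXY_mono[of d 0] by simp
    moreover have "(varY :: 'k poly poly) ^ (a d) = xym 0 (a d)" using varXY_mono[of 0 "a d"] by simp
    ultimately show ?thesis unfolding Jgens_def by (simp add: varXY_mono)
  qed
  have P1: "ideal_pow L 2 =
           ideal_mult (ideal_gen {varX ^ d, varX ^ (d - 1) * varY ^ (a 1), varY ^ (a d)}) L"
    unfolding LL JJ by (rule part1[OF d a0 h3 h5])
  define z where "z = (\<lambda>n::nat. if n = 1 then xym d 0 + xym 0 (a d) else (0 :: 'k poly poly))"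
  have z1: "xym d 0 + xym 0 (a d) \<in> L"
  proof -
    have "xym d 0 \<in> (Lgens d a :: 'k poly poly set)" unfolding Lgens_def using a0
      by (intro image_eqI[of _ _ 0]) auto
    moreover have "xym 0 (a d) \<in> (Lgens d a :: 'k poly poly set)" unfolding Lgens_def
      by (intro image_eqI[of _ _ d]) auto
    ultimately show ?thesis unfolding LL by (intro ideal_gen_add ideal_gen_in)
  qed
  have gz: "gr_elem L z"
    unfolding gr_elem_def
  proof
    show "\<forall>n. z n \<in> ideal_pow L n"
    proof
      fix n show "z n \<in> ideal_pow L n"
      proof (cases "n = 1")
        case True then show ?thesis using z1 unfolding z_def LL by (simp only: pow_one) simp
      next
        case False then show ?thesis unfolding z_def by (simp add: zero_in_pow)
      qed
    qed
    show "\<exists>N. \<forall>n\<ge>N. z n = 0" unfolding z_def by (intro exI[of _ 2]) auto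
  qed
  have "depth_gr_pos (ideal_gen {varX, varY}) L"
    unfolding depth_gr_pos_def
  proof (intro exI[of _ z] conjI allI impI)
    show "gr_elem L z" by (rule gz)
    show "z 0 \<in> ideal_gen {varX, varY}" unfolding z_def by (simp add: ideal_gen_zero)
    fix w assume w: "gr_elem L w \<and> \<not> gr_is_zero L w"
    then obtain n where n: "w n \<notin> ideal_pow L (Suc n)" unfolding gr_is_zero_def by auto
    have wn: "w n \<in> ideal_pow L n" using w unfolding gr_elem_def by auto
    have "gr_mult z w (Suc n) = (\<Sum>i\<le>Suc n. if i = 1 then z 1 * w n else 0)"
      unfolding gr_mult_def by (intro sum.cong) (auto simp: z_def)
    also have "\<dots> = z 1 * w n" by (subst sum.delta) auto
    finally have gm: "gr_mult z w (Suc n) = (xym d 0 + xym 0 (a d)) * w n" by (simp add: z_def)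
    have "(xym d 0 + xym 0 (a d)) * w n \<notin> ideal_pow L (Suc (Suc n))"
      using main_nzd[OF d a0 h3 h5, of "w n" n] wn n unfolding LL by simp
    thus "\<not> gr_is_zero L (gr_mult z w)" unfolding gr_is_zero_def using gm by metis
  qed
  with P1 show ?thesis by simp
qed

end
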